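(* Let $F$ be a CNF formula over variables $x_1,\dots,x_n$ with clauses $C_1,\dots,C_m$ of two or three literals each. Let $R$ be the triple set and $H=(V,A)$ the hypergraph constructed from $F$ as described in the context. If $P\subseteq A$ is an acyclic path in $H$ from $\alpha\beta$ to $c_{m+1}\gamma$, then the triple set $\mathrm{triples}(P)=\{pq|o : \{p,q\}\to\{\{p,o\},\{q,o\}\}\in P\}$ is consistent.
   Context: **Triples and trees.** A rooted triple $pq|o$, with $p,q,o$ distinct leaves and unordered in $p,q$, is displayed by a rooted binary tree $T$ (leaf set containing $p,q,o$) if the path from $p$ to $q$ is node-disjoint from the path from $o$ to the root. A triple set is consistent if some rooted binary tree displays all of its triples. **Triples and arcs.** The triple $pq|o$ corresponds to the hyperarc $\mathrm{arc}(pq|o)=\{p,q\}\to\{\{p,o\},\{q,o\}\}$, and conversely; we write $pq$ for the node $\{p,q\}$. **Hypergraph notions.** A hyperarc $u\to\{v,v'\}$ has tail $u$ and heads $\{v,v'\}$. A path from $u_0$ to $u_\ell$ is a sequence of distinct arcs $(a_1,\dots,a_\ell)$ with $\mathrm{t}(a_1)=u_0$, $u_\ell\in\mathrm{h}(a_\ell)$, and $\mathrm{t}(a_{k+1})\in\mathrm{h}(a_k)$ for all $k$. It is acyclic if no $a_k$ has a head equal to $\mathrm{t}(a_{k'})$ with $k'<k$. **Construction.** Use leaves - $x_i^j,\bar x_i^j,y_i^j,\bar y_i^j$ for $i\in[n]$, $j\in[m]$; - $b_i,b'_i$ for $i\in[n+1]$; - $c_j,d_j$ for $j\in[m]$; -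 $c_{m+1}$, and $\alpha,\beta,\gamma$. The triple set $R$ is the union of the following groups. (i) For each $i\in[n]$: - $b_ib'_i|x_i^1$ and $b'_ix_i^1|y_i^1$; - $x_i^jy_i^j|x_i^{j+1}$ and $y_i^jx_i^{j+1}|y_i^{j+1}$ for $1\le j\le m-1$; - $x_i^my_i^m|b_{i+1}$ and $y_i^mb_{i+1}|b'_{i+1}$. (ii) For each $i\in[n]$: - $b_ib'_i|\bar x_i^1$ and $b'_i\bar x_i^1|\bar y_i^1$; - $\bar x_i^j\bar y_i^j|\bar x_i^{j+1}$ and $\bar y_i^j\bar x_i^{j+1}|\bar y_i^{j+1}$ for $1\le j\le m-1$; - $\bar x_i^m\bar y_i^m|b_{i+1}$ and $\bar x_i^mb_{i+1}|b'_{i+1}$. (iii) For each clause $C_j$: - for each positive occurrence of $x_i$ in $C_j$, the triples $c_jd_j|x_i^j$, $c_jx_i^j|y_i^j$, $c_jy_i^j|c_{j+1}$; - for each negative occurrence of $x_i$ in $C_j$, the same triples with $\bar x_i^j,\bar y_i^j$ in place of $x_i^j,y_i^j$; - if $j<m$, the triple $c_jc_{j+1}|d_{j+1}$. (iv) Connecting triples: $\alpha\beta|b_1$, $\beta b_1|b'_1$, $b_{n+1}b'_{n+1}|c_1$, $b'_{n+1}c_1|d_1$, $c_mc_{m+1}|\gamma$. Then $A=\{\mathrm{arc}(t):t\in R\}$, and $V$ is the set of leaf pairs occurring in arcs of $A$. *)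

theory Defs
  imports Main "HOL-Library.Sublist"
begin

datatype 'a tree = Leaf 'a | Node "'a tree" "'a tree"

fun leaves :: "'a tree \<Rightarrow> 'a list" where
  "leaves (Leaf a) = [a]"
| "leaves (Node l r) = leaves l @ leaves r"

text \<open>Positions of nodes are bool lists (path from the root: False = left, True = right);
  addrs T records each leaf label together with its position.\<close>
fun addrs :: "'a tree \<Rightarrow> ('a \<times> bool list) set" where
  "addrs (Leaf a) = {(a, [])}"
| "addrs (Node l r) = {(a, False # w) | a w. (a, w) \<in> addrs l}
                    \<union> {(a, True # w) | a w. (a, w) \<in> addrs r}"

definition addr :: "'a tree \<Rightarrow> 'a \<Rightarrow> bool list" where
  "addr T a = (THE w. (a, w) \<in> addrs T)"

text \<open>Nodes on the tree path between leaves p and q: ancestors of p or q lying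
  at or below their lowest common ancestor.\<close>
definition path_nodes :: "'a tree \<Rightarrow> 'a \<Rightarrow> 'a \<Rightarrow> bool list set" where
  "path_nodes T p q = {w. (prefix w (addr T p) \<or> prefix w (addr T q)) \<and>
      (\<forall>w'. prefix w' (addr T p) \<and> prefix w' (addr T q) \<longrightarrow> prefix w' w)}"

definition root_path :: "'a tree \<Rightarrow> 'a \<Rightarrow> bool list set" where
  "root_path T r = {w. prefix w (addr T r)}"

text \<open>A rooted triple pq|o is represented by (p,q,o) [written (p,q,r) below]; the order of p,q is irrelevant
  for all notions below.\<close>
type_synonym 'a triple = "'a \<times> 'a \<times> 'a"

definition displays :: "'a tree \<Rightarrow> 'a triple \<Rightarrow> bool" where
  "displays T t = (case t of (p, q, r) \<Rightarrow>
      distinct [p, q, r] \<and> {p, q, r} \<subseteq> set (leaves T) \<and>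
      path_nodes T p q \<inter> root_path T r = {})"

definition consistent :: "'a triple set \<Rightarrow> bool" where
  "consistent S = (\<exists>T. distinct (leaves T) \<and> (\<forall>t\<in>S. displays T t))"

type_synonym 'a hyperarc = "'a set \<times> 'a set set"  \<comment> \<open>(tail, heads)\<close>

definition arc :: "'a triple \<Rightarrow> 'a hyperarc" where
  "arc t = (case t of (p, q, r) \<Rightarrow> ({p, q}, {{p, r}, {q, r}}))"

definition triples_of :: "'a hyperarc set \<Rightarrow> 'a triple set" where
  "triples_of P = {(p, q, r). distinct [p, q, r] \<and> arc (p, q, r) \<in> P}"

definition is_path :: "'a hyperarc list \<Rightarrow> 'a set \<Rightarrow> 'a set \<Rightarrow> bool" where
  "is_path P u v \<longleftrightarrow> P \<noteq> [] \<and> distinct P \<and> fst (hd P) = u \<and> v \<in> snd (last P) \<and>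
      (\<forall>k. Suc k < length P \<longrightarrow> fst (P ! Suc k) \<in> snd (P ! k))"

definition acyclic_path :: "'a hyperarc list \<Rightarrow> bool" where
  "acyclic_path P \<longleftrightarrow> (\<forall>k k'. k' < k \<and> k < length P \<longrightarrow> fst (P ! k') \<notin> snd (P ! k))"

datatype leaf = X nat nat | XB nat nat | Y nat nat | YB nat nat
  | B nat | Bp nat | C nat | D nat | Alpha | Beta | Gamma

text \<open>A CNF formula: n variables, m clauses; clause j is a set of literals (i, s),
  s = True for the positive literal x_i, s = False for the negative literal.\<close>

definition R_i :: "nat \<Rightarrow> nat \<Rightarrow> leaf triple set" where
  "R_i n m = (\<Union>i\<in>{1..n}.
     {(B i, Bp i, X i 1), (Bp i, X i 1, Y i 1),
      (X i m, Y i m, B (i+1)), (Y i m, B (i+1), Bp (i+1))}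
     \<union> (\<Union>j\<in>{1..m-1}. {(X i j, Y i j, X i (j+1)), (Y i j, X i (j+1), Y i (j+1))}))"

definition R_ii :: "nat \<Rightarrow> nat \<Rightarrow> leaf triple set" where
  "R_ii n m = (\<Union>i\<in>{1..n}.
     {(B i, Bp i, XB i 1), (Bp i, XB i 1, YB i 1),
      (XB i m, YB i m, B (i+1)), (XB i m, B (i+1), Bp (i+1))}
     \<union> (\<Union>j\<in>{1..m-1}. {(XB i j, YB i j, XB i (j+1)), (YB i j, XB i (j+1), YB i (j+1))}))"

definition R_iii :: "nat \<Rightarrow> nat \<Rightarrow> (nat \<Rightarrow> (nat \<times> bool) set) \<Rightarrow> leaf triple set" where
  "R_iii n m cls = (\<Union>j\<in>{1..m}.
     (\<Union>i\<in>{1..n}.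
        (if (i, True) \<in> cls j then {(C j, D j, X i j), (C j, X i j, Y i j), (C j, Y i j, C (j+1))} else {})
      \<union> (if (i, False) \<in> cls j then {(C j, D j, XB i j), (C j, XB i j, YB i j), (C j, YB i j, C (j+1))} else {}))
     \<union> (if j < m then {(C j, C (j+1), D (j+1))} else {}))"

definition R_iv :: "nat \<Rightarrow> nat \<Rightarrow> leaf triple set" where
  "R_iv n m = {(Alpha, Beta, B 1), (Beta, B 1, Bp 1), (B (n+1), Bp (n+1), C 1),
               (Bp (n+1), C 1, D 1), (C m, C (m+1), Gamma)}"

definition triple_set :: "nat \<Rightarrow> nat \<Rightarrow> (nat \<Rightarrow> (nat \<times> bool) set) \<Rightarrow> leaf triple set" where
  "triple_set n m cls = R_i n m \<union> R_ii n m \<union> R_iii n m cls \<union> R_iv n m"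

definition arcs :: "nat \<Rightarrow> nat \<Rightarrow> (nat \<Rightarrow> (nat \<times> bool) set) \<Rightarrow> leaf hyperarc set" where
  "arcs n m cls = arc ` triple_set n m cls"

definition hnodes :: "nat \<Rightarrow> nat \<Rightarrow> (nat \<Rightarrow> (nat \<times> bool) set) \<Rightarrow> leaf set set" where
  "hnodes n m cls = (\<Union>a\<in>arcs n m cls. insert (fst a) (snd a))"

end

theory Submission
  imports Defs
begin


fun cat :: "'a list \<Rightarrow> 'a tree" where
  "cat [] = Leaf undefined"
| "cat [x] = Leaf x"
| "cat (x # y # ys) = Node (Leaf x) (cat (y # ys))"

lemma leaves_cat: "xs \<noteq> [] \<Longrightarrow> leaves (cat xs) = xs"
  by (induction xs rule: cat.induct) auto

lemma addrs_leaves: "(a, w) \<in> addrs T \<Longrightarrow> a \<in> set (leaves T)"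
  by (induction T arbitrary: w) auto

lemma addrs_unique: "distinct (leaves T) \<Longrightarrow> (a, w) \<in> addrs T \<Longrightarrow> (a, w') \<in> addrs T \<Longrightarrow> w = w'"
proof (induction T arbitrary: w w')
  case (Leaf x) then show ?case by auto
next
  case (Node l r)
  have dl: "distinct (leaves l)" and dr: "distinct (leaves r)" and dj: "set (leaves l) \<inter> set (leaves r) = {}"
    using Node.prems(1) by auto
  have cases: "\<exists>u. (w = False # u \<and> (a, u) \<in> addrs l) \<or> (w = True # u \<and> (a, u) \<in> addrs r)"
    if "(a, w) \<in> addrs (Node l r)" for w using that by auto
  obtain u where u: "(w = False # u \<and> (a, u) \<in> addrs l) \<or> (w = True # u \<and> (a, u) \<in> addrs r)"
    using cases[OF Node.prems(2)] by blast
  obtain u' where u': "(w' = False # u' \<and> (a, u') \<in> addrs l) \<or> (w' = True # u' \<and> (a, u') \<in> addrs r)"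
    using cases[OF Node.prems(3)] by blast
  show ?case
  proof (cases "w = False # u \<and> (a, u) \<in> addrs l")
    case True
    then have "a \<in> set (leaves l)" using addrs_leaves[of a u l] by simp
    then have "\<not> (a, u') \<in> addrs r" using dj addrs_leaves[of a u' r] by blast
    then have "w' = False # u' \<and> (a, u') \<in> addrs l" using u' by blast
    then show ?thesis using True Node.IH(1)[OF dl] by blast
  next
    case False
    then have F: "w = True # u \<and> (a, u) \<in> addrs r" using u by blast
    then have "a \<in> set (leaves r)" using addrs_leaves[of a u r] by simp
    then have "\<not> (a, u') \<in> addrs l" using dj addrs_leaves[of a u' l] by blast
    then have "w' = True # u' \<and> (a, u') \<in> addrs r" using u' by blast
    then show ?thesis using F Node.IH(2)[OF dr] by blast
  qed
qed

lemma addr_eq: "distinct (leaves T) \<Longrightarrow> (a, w) \<in> addrs T \<Longrightarrow> addr T a = w"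
  unfolding addr_def
  apply (rule the_equality, assumption)
  using addrs_unique[of T a] by blast

lemma leaves_addrs: "a \<in> set (leaves T) \<Longrightarrow> \<exists>w. (a, w) \<in> addrs T"
proof (induction T)
  case (Leaf x) then show ?case by auto
next
  case (Node l r)
  show ?case
  proof (cases "a \<in> set (leaves l)")
    case True
    then obtain w where "(a, w) \<in> addrs l" using Node.IH(1) by blast
    then have "(a, False # w) \<in> addrs (Node l r)" by simp
    then show ?thesis by blast
  next
    case False
    then have "a \<in> set (leaves r)" using Node.prems by simp
    then obtain w where "(a, w) \<in> addrs r" using Node.IH(2) by blast
    then have "(a, True # w) \<in> addrs (Node l r)" by simp
    then show ?thesis by blast
  qed
qed

lemma addr_right: "distinct (leaves (Node l r)) \<Longrightarrow> a \<in> set (leaves r) \<Longrightarrow> addr (Node l r) a = True # addr r a"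
proof -
  assume d: "distinct (leaves (Node l r))" and a: "a \<in> set (leaves r)"
  obtain w where w: "(a, w) \<in> addrs r" using leaves_addrs[OF a] by blast
  have "addr r a = w" using d w by (intro addr_eq) auto
  moreover have "addr (Node l r) a = True # w" using d w by (intro addr_eq) auto
  ultimately show ?thesis by simp
qed

lemma addr_left: "distinct (leaves (Node l r)) \<Longrightarrow> a \<in> set (leaves l) \<Longrightarrow> addr (Node l r) a = False # addr l a"
proof -
  assume d: "distinct (leaves (Node l r))" and a: "a \<in> set (leaves l)"
  obtain w where w: "(a, w) \<in> addrs l" using leaves_addrs[OF a] by blast
  have "addr l a = w" using d w by (intro addr_eq) auto
  moreover have "addr (Node l r) a = False # w" using d w by (intro addr_eq) auto
  ultimately show ?thesis by simp
qed

definition PN :: "bool list \<Rightarrow> bool list \<Rightarrow> bool list set" where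
  "PN u v = {w. (prefix w u \<or> prefix w v) \<and> (\<forall>w'. prefix w' u \<and> prefix w' v \<longrightarrow> prefix w' w)}"

lemma PN_cons: "PN u v \<inter> {w. prefix w z} = {} \<Longrightarrow> PN (b # u) (b # v) \<inter> {w. prefix w (b # z)} = {}"
proof (rule ccontr)
  assume h: "PN u v \<inter> {w. prefix w z} = {}" "PN (b # u) (b # v) \<inter> {w. prefix w (b # z)} \<noteq> {}"
  then obtain w where w: "w \<in> PN (b # u) (b # v)" "prefix w (b # z)" by auto
  have "prefix [b] w" using w(1) unfolding PN_def by auto
  then obtain w' where w': "w = b # w'" by (cases w) auto
  have "w' \<in> PN u v"
    using w(1) unfolding PN_def w' by (auto dest: spec[of _ "b # _"])
  moreover have "prefix w' z" using w(2) w' by auto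
  ultimately show False using h(1) by auto
qed

lemma PN_root: "PN (True # u) (True # v) \<inter> {w. prefix w [False]} = {}"
  unfolding PN_def by (auto dest: spec[of _ "[True]"] simp: prefix_Cons)

lemma displays_PN: "displays T (p, q, r) \<longleftrightarrow> distinct [p, q, r] \<and> {p, q, r} \<subseteq> set (leaves T) \<and>
   PN (addr T p) (addr T q) \<inter> {w. prefix w (addr T r)} = {}"
  unfolding displays_def path_nodes_def root_path_def PN_def by simp

lemma cat_displays:
  fixes f :: "'a \<Rightarrow> nat"
  assumes "distinct L" "sorted_wrt (\<lambda>a b. f b \<le> f a) L"
    "p \<in> set L" "q \<in> set L" "r \<in> set L" "distinct [p, q, r]" "f p < f r" "f q < f r"
  shows "displays (cat L) (p, q, r)"
  using assms
proof (induction L rule: cat.induct)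
  case 1 then show ?case by simp
next
  case (2 x) then show ?case by simp
next
  case (3 x y ys)
  let ?T = "Node (Leaf x) (cat (y # ys))"
  have d: "distinct (leaves ?T)" using 3 by (simp add: leaves_cat)
  show ?case
  proof (cases "r = x")
    case True
    have pq: "p \<in> set (y # ys)" "q \<in> set (y # ys)" using 3 True by auto
    have "addr ?T p = True # addr (cat (y#ys)) p" "addr ?T q = True # addr (cat (y#ys)) q"
      using d pq by (auto intro!: addr_right simp: leaves_cat simp del: leaves.simps)
    moreover have "addr ?T r = [False]" using d True
      by (subst addr_left) (auto simp: addr_eq)
    ultimately show ?thesis using 3 d PN_root True unfolding displays_PN
      by (simp add: leaves_cat)
  next
    case False
    have p: "p \<noteq> x" using 3 False by auto
    have q: "q \<noteq> x" using 3 False by auto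
    have pqr: "p \<in> set (y # ys)" "q \<in> set (y # ys)" "r \<in> set (y # ys)" using 3 False p q by auto
    have IH: "displays (cat (y # ys)) (p, q, r)" using 3 pqr by auto
    have "addr ?T p = True # addr (cat (y#ys)) p" "addr ?T q = True # addr (cat (y#ys)) q"
      "addr ?T r = True # addr (cat (y#ys)) r"
      using d pqr by (auto intro!: addr_right simp: leaves_cat simp del: leaves.simps)
    then show ?thesis using IH PN_cons unfolding displays_PN
      by (simp add: leaves_cat)
  qed
qed

lemma consistent_rank:
  fixes f :: "'a \<Rightarrow> nat"
  assumes "finite U" "\<forall>(p, q, r)\<in>S. distinct [p, q, r] \<and> p \<in> U \<and> q \<in> U \<and> r \<in> U \<and> f p < f r \<and> f q < f r"
  shows "consistent S"
proof -
  obtain xs where xs0: "set xs = U \<and> distinct xs" using finite_distinct_list[OF assms(1)] ..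
  have xs: "set xs = U" "distinct xs" using xs0 by simp_all
  define L where "L = rev (sort_key f xs)"
  have L: "set L = U" "distinct L" "sorted_wrt (\<lambda>a b. f b \<le> f a) L"
  proof -
    have "sorted (map f (sort_key f xs))" by (rule sorted_sort_key)
    then have "sorted_wrt (\<lambda>a b. f a \<le> f b) (sort_key f xs)" by (simp only: sorted_map)
    then show "sorted_wrt (\<lambda>a b. f b \<le> f a) L" unfolding L_def by (simp only: sorted_wrt_rev)
  qed (use xs in \<open>simp_all add: L_def\<close>)
  show ?thesis
  proof (cases "L = []")
    case True
    then have "S = {}" using assms(2) L by auto
    then show ?thesis unfolding consistent_def by (auto intro: exI[of _ "Leaf undefined"])
  next
    case False
    show ?thesis unfolding consistent_def
    proof (intro exI[of _ "cat L"] conjI ballI)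
      show "distinct (leaves (cat L))" using False L by (simp add: leaves_cat)
      fix t assume "t \<in> S"
      then obtain p q r where "t = (p, q, r)" "distinct [p, q, r]" "p \<in> U" "q \<in> U" "r \<in> U" "f p < f r" "f q < f r"
        using assms(2) by fastforce
      then show "displays (cat L) t" using cat_displays[OF L(2) L(3)] L(1) by simp
    qed
  qed
qed



definition isC :: "nat \<Rightarrow> leaf set \<Rightarrow> bool" where
  "isC n S \<longleftrightarrow> (\<exists>j. C j \<in> S) \<or> S = {B (n+1), Bp (n+1)}"

fun wv :: "nat \<Rightarrow> leaf \<Rightarrow> nat" where
  "wv m Alpha = 0" | "wv m Beta = 1"
| "wv m (B i) = (2*m+2)*i" | "wv m (Bp i) = (2*m+2)*i + 1"
| "wv m (X i j) = (2*m+2)*i + 2*j" | "wv m (XB i j) = (2*m+2)*i + 2*j"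
| "wv m (Y i j) = (2*m+2)*i + 2*j + 1" | "wv m (YB i j) = (2*m+2)*i + 2*j + 1"
| "wv m _ = 0"

fun wc :: "leaf \<Rightarrow> nat" where
  "wc (B i) = 0" | "wc (Bp i) = 1" | "wc (C j) = 4*j" | "wc (D j) = 4*j+1"
| "wc (X i j) = 4*j+2" | "wc (XB i j) = 4*j+2" | "wc (Y i j) = 4*j+3" | "wc (YB i j) = 4*j+3"
| "wc _ = 0"

definition pot :: "nat \<Rightarrow> nat \<Rightarrow> leaf set \<Rightarrow> nat" where
  "pot n m S = (if isC n S then sum wc S else sum (wv m) S)"

definition lt :: "nat \<Rightarrow> nat \<Rightarrow> leaf set \<Rightarrow> leaf set \<Rightarrow> bool" where
  "lt n m S S' \<longleftrightarrow> (\<not> isC n S \<and> isC n S') \<or> (isC n S = isC n S' \<and> pot n m S < pot n m S')"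

lemma TS_cases[consumes 1, case_names a1 a2 a3 a4 a5 v1 v2 v3 v4 v5 v6 w1 w2 w3 w4 w5 w6 c1 c2 c3 c4 c5 c6 c7]:
  assumes "t \<in> triple_set n m cls"
  obtains "t = (Alpha, Beta, B 1)"
  | "t = (Beta, B 1, Bp 1)"
  | "t = (B (n+1), Bp (n+1), C 1)"
  | "t = (Bp (n+1), C 1, D 1)"
  | "t = (C m, C (m+1), Gamma)"
  | i where "1 \<le> i" "i \<le> n" "t = (B i, Bp i, X i 1)"
  | i where "1 \<le> i" "i \<le> n" "t = (Bp i, X i 1, Y i 1)"
  | i where "1 \<le> i" "i \<le> n" "t = (X i m, Y i m, B (i+1))"
  | i where "1 \<le> i" "i \<le> n" "t = (Y i m, B (i+1), Bp (i+1))"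
  | i j where "1 \<le> i" "i \<le> n" "1 \<le> j" "j < m" "t = (X i j, Y i j, X i (j+1))"
  | i j where "1 \<le> i" "i \<le> n" "1 \<le> j" "j < m" "t = (Y i j, X i (j+1), Y i (j+1))"
  | i where "1 \<le> i" "i \<le> n" "t = (B i, Bp i, XB i 1)"
  | i where "1 \<le> i" "i \<le> n" "t = (Bp i, XB i 1, YB i 1)"
  | i where "1 \<le> i" "i \<le> n" "t = (XB i m, YB i m, B (i+1))"
  | i where "1 \<le> i" "i \<le> n" "t = (XB i m, B (i+1), Bp (i+1))"
  | i j where "1 \<le> i" "i \<le> n" "1 \<le> j" "j < m" "t = (XB i j, YB i j, XB i (j+1))"
  | i j where "1 \<le> i" "i \<le> n" "1 \<le> j" "j < m" "t = (YB i j, XB i (j+1), YB i (j+1))"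
  | i j where "1 \<le> i" "i \<le> n" "1 \<le> j" "j \<le> m" "(i, True) \<in> cls j" "t = (C j, D j, X i j)"
  | i j where "1 \<le> i" "i \<le> n" "1 \<le> j" "j \<le> m" "(i, True) \<in> cls j" "t = (C j, X i j, Y i j)"
  | i j where "1 \<le> i" "i \<le> n" "1 \<le> j" "j \<le> m" "(i, True) \<in> cls j" "t = (C j, Y i j, C (j+1))"
  | i j where "1 \<le> i" "i \<le> n" "1 \<le> j" "j \<le> m" "(i, False) \<in> cls j" "t = (C j, D j, XB i j)"
  | i j where "1 \<le> i" "i \<le> n" "1 \<le> j" "j \<le> m" "(i, False) \<in> cls j" "t = (C j, XB i j, YB i j)"
  | i j where "1 \<le> i" "i \<le> n" "1 \<le> j" "j \<le> m" "(i, False) \<in> cls j" "t = (C j, YB i j, C (j+1))"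
  | j where "1 \<le> j" "j < m" "t = (C j, C (j+1), D (j+1))"
  using assms unfolding triple_set_def R_i_def R_ii_def R_iii_def R_iv_def
  apply atomize_elim
  apply (elim UnE UN_E insertE emptyE)
  apply (simp_all split: if_splits)
  apply (elim disjE conjE; simp)+
  done

lemma doubleton_mem: "{a, b} \<in> {{c, d}, {e, f}} \<longleftrightarrow> ({a,b} = {c,d} \<or> {a,b} = {e,f})" by auto

lemmas ss = doubleton_eq_iff doubleton_mem isC_def lt_def pot_def

lemma mono_step:
  assumes "t \<in> triple_set n m cls" "t' \<in> triple_set n m cls"
    "fst (arc t') \<in> snd (arc t)"
  shows "lt n m (fst (arc t)) (fst (arc t')) \<or> (isC n (fst (arc t)) \<and> \<not> isC n (fst (arc t')))"
  using assms
  apply -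
  apply (erule TS_cases; erule TS_cases)
  apply (simp_all add: ss arc_def)
  apply auto
  done

lemma vc_step:
  assumes "t \<in> triple_set n m cls" "t' \<in> triple_set n m cls"
    "fst (arc t') \<in> snd (arc t)" "\<not> isC n (fst (arc t))" "isC n (fst (arc t'))"
  shows "fst (arc t') = {B (n+1), Bp (n+1)}"
  using assms
  apply -
  apply (erule TS_cases; erule TS_cases)
  apply (simp_all add: ss arc_def)
  apply auto?
  done

lemma TS_distinct: "t \<in> triple_set n m cls \<Longrightarrow> t = (p, q, r) \<Longrightarrow> distinct [p, q, r]"
  by (erule TS_cases) auto

lemma TS_last: "t \<in> triple_set n m cls \<Longrightarrow> {C (m+1), Gamma} \<in> snd (arc t) \<Longrightarrow> t = (C m, C (m+1), Gamma)"
  by (erule TS_cases) (auto simp: ss arc_def)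

definition fwd :: "nat \<Rightarrow> nat \<Rightarrow> (nat \<Rightarrow> (nat \<times> bool) set) \<Rightarrow> leaf set \<Rightarrow> leaf set \<Rightarrow> bool" where
  "fwd n m cls Z \<tau> \<longleftrightarrow> (\<forall>t1 t2. t1 \<in> triple_set n m cls \<longrightarrow> t2 \<in> triple_set n m cls \<longrightarrow>
      fst (arc t1) = \<tau> \<longrightarrow> fst (arc t2) \<in> snd (arc t1) \<longrightarrow> fst (arc t2) = Z)"

definition bwd :: "nat \<Rightarrow> nat \<Rightarrow> (nat \<Rightarrow> (nat \<times> bool) set) \<Rightarrow> leaf set \<Rightarrow> leaf set \<Rightarrow> bool" where
  "bwd n m cls Z \<tau> \<longleftrightarrow> (\<forall>t1. t1 \<in> triple_set n m cls \<longrightarrow> \<tau> \<in> snd (arc t1) \<longrightarrow> fst (arc t1) = Z)"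

lemma fwd_1: "fwd n m cls {X i (Suc 0), Y i (Suc 0)} {Bp i, X i (Suc 0)}"
  unfolding fwd_def
  apply (intro allI impI)
  apply (erule TS_cases; erule TS_cases)
  apply (simp_all add: ss arc_def)
  apply auto?
  done

lemma fwd_2: "fwd n m cls {X i (Suc j), Y i (Suc j)} {Y i j, X i (Suc j)}"
  unfolding fwd_def
  apply (intro allI impI)
  apply (erule TS_cases; erule TS_cases)
  apply (simp_all add: ss arc_def)
  apply auto?
  done

lemma fwd_3: "fwd n m cls {XB i (Suc 0), YB i (Suc 0)} {Bp i, XB i (Suc 0)}"
  unfolding fwd_def
  apply (intro allI impI)
  apply (erule TS_cases; erule TS_cases)
  apply (simp_all add: ss arc_def)
  apply auto?
  done

lemma fwd_4: "fwd n m cls {XB i (Suc j), YB i (Suc j)} {YB i j, XB i (Suc j)}"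
  unfolding fwd_def
  apply (intro allI impI)
  apply (erule TS_cases; erule TS_cases)
  apply (simp_all add: ss arc_def)
  apply auto?
  done

lemma bwd_1: "bwd n m cls {X i j, Y i j} {Y i j, X i (Suc j)}"
  unfolding bwd_def
  apply (intro allI impI)
  apply (erule TS_cases)
  apply (simp_all add: ss arc_def)
  apply auto?
  done

lemma bwd_2: "bwd n m cls {X i m, Y i m} {Y i m, B (Suc i)}"
  unfolding bwd_def
  apply (intro allI impI)
  apply (erule TS_cases)
  apply (simp_all add: ss arc_def)
  apply auto?
  done

lemma bwd_3: "bwd n m cls {XB i j, YB i j} {YB i j, XB i (Suc j)}"
  unfolding bwd_def
  apply (intro allI impI)
  apply (erule TS_cases)
  apply (simp_all add: ss arc_def)
  apply auto?
  done

lemma bwd_4: "bwd n m cls {XB i m, YB i m} {XB i m, B (Suc i)}"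
  unfolding bwd_def
  apply (intro allI impI)
  apply (erule TS_cases)
  apply (simp_all add: ss arc_def)
  apply auto?
  done


fun yof :: "leaf \<Rightarrow> leaf" where
  "yof (X i j) = Y i j" | "yof (XB i j) = YB i j" | "yof v = v"

definition Zof :: "leaf triple \<Rightarrow> leaf set" where
  "Zof t = (case t of (p, q, r) \<Rightarrow> if (\<exists>j. q = D j) then {r, yof r} else {q, r})"

definition exc :: "leaf triple \<Rightarrow> bool" where
  "exc t \<longleftrightarrow> (\<exists>i j. t = (C j, D j, X i j) \<or> t = (C j, X i j, Y i j) \<or> t = (C j, D j, XB i j) \<or> t = (C j, XB i j, YB i j))"

lemmas fb = fwd_1 fwd_2 fwd_3 fwd_4 bwd_1 bwd_2 bwd_3 bwd_4

lemma fresh_local: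
  assumes "(p, q, r) \<in> triple_set n m cls" "t' \<in> triple_set n m cls" "r \<in> fst (arc t')"
  shows "lt n m {p, q} (fst (arc t')) \<or> (exc (p, q, r) \<and> (fst (arc t') = Zof (p, q, r) \<or> fwd n m cls (Zof (p, q, r)) (fst (arc t')) \<or> bwd n m cls (Zof (p, q, r)) (fst (arc t'))))"
  using assms
  apply -
  apply (erule TS_cases; erule TS_cases)
  apply (simp_all add: ss arc_def exc_def Zof_def fb)
  apply (auto simp: eq_commute[of "Suc 0"])?
  done

lemma excZ:
  assumes "t \<in> triple_set n m cls" "exc t"
  shows "(Zof t \<in> snd (arc t) \<and> Zof t \<noteq> fst (arc t)) \<or>
    ((\<forall>t'\<in>triple_set n m cls. fst (arc t') \<in> snd (arc t) \<longrightarrow> Zof t \<in> snd (arc t')) \<and> {C (m+1), Gamma} \<notin> snd (arc t))"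
  using assms(2)
  unfolding exc_def
  apply (elim exE disjE)
  apply (simp_all add: ss arc_def Zof_def)
  apply (intro ballI impI; erule TS_cases; simp add: ss arc_def)+
  done

lemma exc_r: "exc (p, q, r) \<Longrightarrow> r \<noteq> Alpha \<and> r \<noteq> Beta"
  unfolding exc_def by auto



lemma ivt_nat: "\<not> Q i \<Longrightarrow> Q j \<Longrightarrow> i \<le> j \<Longrightarrow> \<exists>k. i \<le> k \<and> k < j \<and> \<not> Q k \<and> Q (Suc k)"
proof (induction j)
  case 0 then show ?case by simp
next
  case (Suc j)
  show ?case
  proof (cases "Q j")
    case True
    then have "i \<le> j" using Suc.prems by (cases "i = Suc j") auto
    then obtain k where "i \<le> k \<and> k < j \<and> \<not> Q k \<and> Q (Suc k)" using Suc.IH Suc.prems True by blast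
    then show ?thesis by (intro exI[of _ k]) auto
  next
    case False
    then have "i \<le> j" using Suc.prems by (cases "i = Suc j") auto
    then show ?thesis using False Suc.prems by (intro exI[of _ j]) auto
  qed
qed

lemma arc_tail_notin: "distinct [p, q, r] \<Longrightarrow> fst (arc (p, q, r)) \<notin> snd (arc (p, q, r))"
  unfolding arc_def by (auto simp: doubleton_eq_iff)

lemma arc_inj: "distinct [p, q, r] \<Longrightarrow> arc (p, q, r) = arc (p', q', r') \<Longrightarrow> r = r' \<and> {p, q} = {p', q'}"
proof -
  assume d: "distinct [p, q, r]" and e: "arc (p, q, r) = arc (p', q', r')"
  have 1: "{p, q} = {p', q'}" using arg_cong[OF e, of fst] by (simp only: arc_def prod.case fst_conv)
  have s1: "snd (arc (p, q, r)) = {{p, r}, {q, r}}" by (simp add: arc_def)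
  have s2: "snd (arc (p', q', r')) = {{p', r'}, {q', r'}}" by (simp add: arc_def)
  have "snd (arc (p, q, r)) = snd (arc (p', q', r'))" using e by (rule arg_cong)
  then have 2: "{{p, r}, {q, r}} = {{p', r'}, {q', r'}}" unfolding s1 s2 .
  have "r = r'"
  proof (rule ccontr)
    assume "r \<noteq> r'"
    have "{p, r} \<in> {{p, r}, {q, r}}" by simp
    then have "{p, r} \<in> {{p', r'}, {q', r'}}" unfolding 2 .
    then have "{p, r} = {p', r'} \<or> {p, r} = {q', r'}" by simp
    then have "r \<in> {p', q'}" using \<open>r \<noteq> r'\<close> by (auto simp: doubleton_eq_iff)
    then show False using 1 d by auto
  qed
  then show ?thesis using 1 by simp
qed

lemma arc_finite: "finite (fst (arc t)) \<and> finite (snd (arc t)) \<and> (\<forall>h\<in>snd (arc t). finite h)"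
  by (cases t) (auto simp: arc_def)

lemma lt_trans: "lt n m a b \<Longrightarrow> lt n m b c \<Longrightarrow> lt n m a c"
  unfolding lt_def by auto

lemma lt_asym: "lt n m a b \<Longrightarrow> lt n m b a \<Longrightarrow> False"
  unfolding lt_def by auto

theorem lemma2:
  fixes n m :: nat and cls :: "nat \<Rightarrow> (nat \<times> bool) set" and P :: "leaf hyperarc list"
  assumes "n \<ge> 1" and "m \<ge> 1"
    and "\<forall>j\<in>{1..m}. finite (cls j) \<and> card (cls j) \<in> {2, 3} \<and> (\<forall>(i, s)\<in>cls j. i \<in> {1..n})"
    and "set P \<subseteq> arcs n m cls"
    and "is_path P {Alpha, Beta} {C (m+1), Gamma}"
    and "acyclic_path P"
  shows "consistent (triples_of (set P))"
proof -
  define len where "len = length P"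
  define T where "T k = fst (P ! k)" for k
  define Hd where "Hd k = snd (P ! k)" for k
  have Pne: "P \<noteq> []" and hdP: "fst (hd P) = {Alpha, Beta}" and lastP: "{C (m+1), Gamma} \<in> snd (last P)"
    and succP: "\<forall>k. Suc k < length P \<longrightarrow> fst (P ! Suc k) \<in> snd (P ! k)"
    using assms(5) unfolding is_path_def by auto
  have lenpos: "0 < len" using Pne len_def by simp
  have inA: "\<exists>t\<in>triple_set n m cls. P ! k = arc t" if hyp: "k < len" for k
  proof -
    have "P ! k \<in> set P" using hyp len_def by simp
    then show ?thesis using assms(4) unfolding arcs_def by blast
  qed
  have succ: "T (Suc k) \<in> Hd k" if hyp: "Suc k < len" for k
    using succP hyp unfolding T_def Hd_def len_def by blast
  have acyc: "T k' \<notin> Hd k" if hyp: "k' < k" "k < len" for k k'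
    using assms(6) hyp unfolding acyclic_path_def T_def Hd_def len_def by blast
  have T0: "T 0 = {Alpha, Beta}" using hdP Pne unfolding T_def by (simp add: hd_conv_nth)
  have lastH: "{C (m+1), Gamma} \<in> Hd (len - 1)" using lastP Pne unfolding Hd_def len_def by (simp add: last_conv_nth)
  have tl_nh: "T k \<notin> Hd k" if hyp: "k < len" for k
  proof -
    obtain t where t: "t \<in> triple_set n m cls" "P ! k = arc t" using inA[OF hyp] by blast
    obtain p q r where pqr: "t = (p, q, r)" by (cases t) auto
    have "distinct [p, q, r]" using TS_distinct[OF t(1) pqr] .
    then show ?thesis using arc_tail_notin t pqr unfolding T_def Hd_def by simp
  qed
  have tdist: "T k' \<noteq> T k" if hyp: "k' < k" "k < len" for k' k
  proof -
    obtain k0 where k0: "k = Suc k0" using hyp by (cases k) auto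
    have "T k \<in> Hd k0" using succ hyp k0 by simp
    moreover have "T k' \<notin> Hd k0"
    proof (cases "k' < k0")
      case True then show ?thesis using acyc hyp k0 by simp
    next
      case False then have "k' = k0" using hyp k0 by simp
      then show ?thesis using tl_nh hyp k0 by simp
    qed
    ultimately show ?thesis by auto
  qed
  have lastC: "isC n (T (len - 1))"
  proof -
    have "len - 1 < len" using lenpos by simp
    then obtain t where t: "t \<in> triple_set n m cls" "P ! (len - 1) = arc t" using inA by blast
    have "t = (C m, C (m+1), Gamma)" using TS_last[OF t(1)] lastH t(2) unfolding Hd_def by simp
    then show ?thesis using t(2) unfolding T_def isC_def arc_def by auto
  qed
  have T0V: "\<not> isC n (T 0)" using T0 unfolding isC_def by (auto simp: doubleton_eq_iff)
  have vc: "T (Suc k) = {B (n+1), Bp (n+1)}" if hyp: "Suc k < len" "\<not> isC n (T k)" "isC n (T (Suc k))" for k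
  proof -
    obtain t where t: "t \<in> triple_set n m cls" "P ! k = arc t" using inA[of k] hyp(1) by (meson Suc_lessD)
    obtain t' where t': "t' \<in> triple_set n m cls" "P ! Suc k = arc t'" using inA[of "Suc k"] hyp(1) by blast
    show ?thesis using vc_step[OF t(1) t'(1)] succ[OF hyp(1)] hyp t t' unfolding T_def Hd_def by simp
  qed
  have noCV: "isC n (T (Suc k))" if hyp: "Suc k < len" "isC n (T k)" for k
  proof (rule ccontr)
    assume nc: "\<not> isC n (T (Suc k))"
    obtain k1 where k1: "0 \<le> k1" "k1 < k" "\<not> isC n (T k1)" "isC n (T (Suc k1))"
      using ivt_nat[of "\<lambda>k. isC n (T k)" 0 k] T0V hyp by auto
    have e1: "T (Suc k1) = {B (n+1), Bp (n+1)}" using vc k1 hyp by simp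
    have "Suc k \<le> len - 1" using hyp by simp
    then obtain k2 where k2: "Suc k \<le> k2" "k2 < len - 1" "\<not> isC n (T k2)" "isC n (T (Suc k2))"
      using ivt_nat[of "\<lambda>k. isC n (T k)" "Suc k" "len - 1"] nc lastC by auto
    have e2: "T (Suc k2) = {B (n+1), Bp (n+1)}" using vc k2 by simp
    have "T (Suc k1) \<noteq> T (Suc k2)" using tdist k1 k2 by simp
    then show False using e1 e2 by simp
  qed
  have mono: "lt n m (T k) (T (Suc k))" if hyp: "Suc k < len" for k
  proof -
    obtain t where t: "t \<in> triple_set n m cls" "P ! k = arc t" using inA[of k] hyp(1) by (meson Suc_lessD)
    obtain t' where t': "t' \<in> triple_set n m cls" "P ! Suc k = arc t'" using inA[of "Suc k"] hyp(1) by blast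
    show ?thesis using mono_step[OF t(1) t'(1)] succ[OF hyp] noCV[OF hyp] t t' unfolding T_def Hd_def by auto
  qed
  have chain: "lt n m (T k') (T k)" if hyp: "k' < k" "k < len" for k' k
    using hyp
  proof (induction k)
    case 0 then show ?case by simp
  next
    case (Suc k)
    show ?case
    proof (cases "k' = k")
      case True then show ?thesis using mono Suc.prems by simp
    next
      case False
      then have "lt n m (T k') (T k)" using Suc by simp
      then show ?thesis using mono[of k] Suc.prems lt_trans by blast
    qed
  qed
  have fresh: "r \<notin> T k'" if k: "k < len" "P ! k = arc (p, q, r)" "(p, q, r) \<in> triple_set n m cls" "k' \<le> k" for k p q r k'
  proof
    assume rin: "r \<in> T k'"
    have dpqr: "distinct [p, q, r]" using TS_distinct[OF k(3)] by simp
    have Tk: "T k = {p, q}" using k(2) unfolding T_def arc_def by simp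
    show False
    proof (cases "k' = k")
      case True then show False using rin Tk dpqr by auto
    next
      case False
      then have kk: "k' < k" using k by simp
      obtain t' where t': "t' \<in> triple_set n m cls" "P ! k' = arc t'" using inA[of k'] kk k(1) by (meson less_trans)
      have Tk': "T k' = fst (arc t')" using t' unfolding T_def by simp
      note fl = fresh_local[OF k(3) t'(1), folded Tk', OF rin]
      show False
      proof (cases "lt n m {p, q} (T k')")
        case True then show False using chain[OF kk k(1)] Tk lt_asym by simp
      next
        case False
        define Z where "Z = Zof (p, q, r)"
        have ex: "exc (p, q, r)" and alt: "T k' = Z \<or> fwd n m cls Z (T k') \<or> bwd n m cls Z (T k')"
          using fl False unfolding Z_def by auto
        have barrier: "T k'' \<noteq> Z" if hyp: "k'' \<le> k" for k''
        proof -
          have Hdk: "Hd k = snd (arc (p, q, r))" using k(2) unfolding Hd_def by simp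
          from excZ[OF k(3) ex, folded Z_def]
          show ?thesis
          proof
            assume a: "Z \<in> snd (arc (p, q, r)) \<and> Z \<noteq> fst (arc (p, q, r))"
            show ?thesis
            proof (cases "k'' = k")
              case True then show ?thesis using a k(2) unfolding T_def by auto
            next
              case False then show ?thesis using a acyc[of k'' k] hyp k(1) Hdk by auto
            qed
          next
            assume a: "(\<forall>t'\<in>triple_set n m cls. fst (arc t') \<in> snd (arc (p, q, r)) \<longrightarrow> Z \<in> snd (arc t')) \<and>
                {C (m+1), Gamma} \<notin> snd (arc (p, q, r))"
            have "k \<noteq> len - 1" using a lastH Hdk by auto
            then have sk: "Suc k < len" using k(1) by simp
            obtain t2 where t2: "t2 \<in> triple_set n m cls" "P ! Suc k = arc t2" using inA[of "Suc k"] sk by blast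
            have "fst (arc t2) \<in> snd (arc (p, q, r))" using succ[OF sk] t2 Hdk unfolding T_def by simp
            then have "Z \<in> Hd (Suc k)" using a t2 unfolding Hd_def by auto
            then show ?thesis using acyc[of k'' "Suc k"] hyp sk by auto
          qed
        qed
        from alt show False
        proof (elim disjE)
          assume "T k' = Z" then show False using barrier kk by simp
        next
          assume fw: "fwd n m cls Z (T k')"
          have sk': "Suc k' < len" using kk k by simp
          obtain t2 where t2: "t2 \<in> triple_set n m cls" "P ! Suc k' = arc t2" using inA[of "Suc k'"] sk' by blast
          have "fst (arc t2) \<in> snd (arc t')" using succ[OF sk'] t2 t' unfolding T_def Hd_def by simp
          then have "fst (arc t2) = Z" using fw t'(1) t2(1) Tk' unfolding fwd_def by blast
          then have "T (Suc k') = Z" using t2 unfolding T_def by simp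
          then show False using barrier[of "Suc k'"] kk by simp
        next
          assume bw: "bwd n m cls Z (T k')"
          have "k' \<noteq> 0"
          proof
            assume "k' = 0"
            then have "r \<in> {Alpha, Beta}" using rin T0 by simp
            then show False using exc_r[OF ex] by simp
          qed
          then obtain k0 where k0: "k' = Suc k0" by (cases k') auto
          have sk0: "Suc k0 < len" using kk k k0 by simp
          obtain t1 where t1: "t1 \<in> triple_set n m cls" "P ! k0 = arc t1" using inA[of k0] sk0 by (meson Suc_lessD)
          have "T k' \<in> snd (arc t1)" using succ[OF sk0] t1 k0 unfolding Hd_def by simp
          then have "fst (arc t1) = Z" using bw t1(1) unfolding bwd_def by blast
          then have "T k0 = Z" using t1 unfolding T_def by simp
          then show False using barrier[of k0] kk k0 by simp
        qed
      qed
    qed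
  qed
  define f where "f v = (if \<exists>k<len. v \<in> T k then LEAST k. k < len \<and> v \<in> T k else len)" for v
  define U where "U = (\<Union>k<len. T k \<union> \<Union>(Hd k))"
  have finU: "finite U"
    unfolding U_def
  proof (intro finite_UN_I finite_lessThan finite_UnI finite_Union)
    fix k assume "k \<in> {..<len}"
    then have "k < len" by simp
    then obtain t where t: "P ! k = arc t" using inA by blast
    show "finite (T k)" "finite (Hd k)" using arc_finite[of t] t unfolding T_def Hd_def by auto
    show "\<And>h. h \<in> Hd k \<Longrightarrow> finite h" using arc_finite[of t] t unfolding Hd_def by auto
  qed
  show ?thesis
  proof (rule consistent_rank[OF finU, of _ f], safe)
    fix p q r assume a: "(p, q, r) \<in> triples_of (set P)"
    then have d: "distinct [p, q, r]" and ain: "arc (p, q, r) \<in> set P" unfolding triples_of_def by auto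
    then obtain k where k: "k < len" "P ! k = arc (p, q, r)" unfolding len_def by (auto simp: in_set_conv_nth)
    obtain t where t: "t \<in> triple_set n m cls" "P ! k = arc t" using inA k(1) by blast
    obtain p' q' r' where pqr': "t = (p', q', r')" by (cases t) auto
    have Pk': "P ! k = arc (p', q', r')" using t(2) pqr' by simp
    have tin: "(p', q', r') \<in> triple_set n m cls" using t(1) pqr' by simp
    have "arc (p, q, r) = arc (p', q', r')" using k(2) Pk' by simp
    then have rr: "r = r'" using arc_inj[OF d] by blast
    have Tk: "T k = {p, q}" using k(2) unfolding T_def arc_def by simp
    have Hk: "{p, r} \<in> Hd k" using k(2) unfolding Hd_def arc_def by simp
    have fr: "\<forall>k'\<le>k. r \<notin> T k'"
    proof (intro allI impI)
      fix k' assume "k' \<le> k"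
      then show "r \<notin> T k'" using fresh[OF k(1) Pk' tin] rr by simp
    qed
    have fle: "f v \<le> k" if hyp: "v \<in> T k" for v
    proof -
      have "\<exists>k<len. v \<in> T k" using hyp k(1) by blast
      then show ?thesis unfolding f_def using hyp k(1) by (auto intro: Least_le)
    qed
    have fgt: "k < f r"
    proof (cases "\<exists>k<len. r \<in> T k")
      case True
      then have "(LEAST k. k < len \<and> r \<in> T k) < len \<and> r \<in> T (LEAST k. k < len \<and> r \<in> T k)"
        by (rule LeastI_ex)
      then have "\<not> (LEAST k. k < len \<and> r \<in> T k) \<le> k" using fr by blast
      then show ?thesis unfolding f_def using True by simp
    next
      case False then show ?thesis unfolding f_def using k(1) by auto
    qed
    show "distinct [p, q, r]" by (rule d)
    show "p \<in> U" "q \<in> U" using Tk k(1) unfolding U_def by auto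
    show "r \<in> U" using Hk k(1) unfolding U_def by blast
    show "f p < f r" "f q < f r" using fle[of p] fle[of q] fgt Tk by auto
  qed
qed

end
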